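(* Let $\mathbb M=(V,d)$ be a binary structure and let $X,Y$ be disjoint non-empty modules of $\mathbb M$. Suppose $Y$ is a robust module with at least two elements whose Gallai quotient is not prime and such that $\{d(X,Y),d(Y,X)\}=t(Y)$. Then $X\cup Y$ is not a module of $\mathbb M$.
   Context: A binary structure over a set $W$ is a pair $\mathbb M=(V,d)$ with $d:V\times V\to W$. A module of $\mathbb M$ is a set $A\subseteq V$ such that $d(x,y)=d(x,y')$ and $d(y,x)=d(y',x)$ for all $x\in V\setminus A$ and $y,y'\in A$. A module is strong if for every module $B$, either $A\subseteq B$, $B\subseteq A$, or $A\cap B=\emptyset$. For $Z\subseteq V$, $S_{\mathbb M}(Z)$ is the intersection of all strong modules containing $Z$. A module is robust if it is a singleton or equals $S_{\mathbb M}(\{x,y\})$ for some distinct $x,y\in V$. For disjoint non-empty modules $X,Y$, $d(X,Y)$ denotes the common value of $d(x,y)$ for $x\in X$, $y\in Y$. For a strong module $A$ and $x,y\in A$, put $x\equiv_A y$ iff $x=y$ or some strong module containing $x,y$ is properly contained in $A$; the classes (components of $A$) are modules, and a robust $A$ with $|A|\ge 2$ has at least two components. The Gallai quotient of such $A$ is the binary structure on its set of components given by $(I,J)\mapsto d(I,J)$ for $I\ne J$; it is prime if it has at least three elements and only trivial modules (empty, singletons, whole set). If the Gallai quotient of $A$ is not prime, the type of $A$ is $t(A)=\{d(I,J): I,J$ distinct components of $A\}$. *)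

theory Defs
  imports Main
begin

text \<open>A binary structure is a pair (V, d) with d : V x V -> W; here V :: 'a set and
  d :: 'a => 'a => 'w (values of d outside V x V are irrelevant).\<close>

definition is_module :: "'a set \<Rightarrow> ('a \<Rightarrow> 'a \<Rightarrow> 'w) \<Rightarrow> 'a set \<Rightarrow> bool" where
  "is_module V d A \<longleftrightarrow> A \<subseteq> V \<and>
     (\<forall>x\<in>V - A. \<forall>y\<in>A. \<forall>y'\<in>A. d x y = d x y' \<and> d y x = d y' x)"

definition strong_module :: "'a set \<Rightarrow> ('a \<Rightarrow> 'a \<Rightarrow> 'w) \<Rightarrow> 'a set \<Rightarrow> bool" where
  "strong_module V d A \<longleftrightarrow> is_module V d A \<and>
     (\<forall>B. is_module V d B \<longrightarrow> A \<subseteq> B \<or> B \<subseteq> A \<or> A \<inter> B = {})"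

definition S_hull :: "'a set \<Rightarrow> ('a \<Rightarrow> 'a \<Rightarrow> 'w) \<Rightarrow> 'a set \<Rightarrow> 'a set" where
  "S_hull V d Z = \<Inter> {A. strong_module V d A \<and> Z \<subseteq> A}"

definition robust_module :: "'a set \<Rightarrow> ('a \<Rightarrow> 'a \<Rightarrow> 'w) \<Rightarrow> 'a set \<Rightarrow> bool" where
  "robust_module V d A \<longleftrightarrow>
     (\<exists>x\<in>V. A = {x}) \<or> (\<exists>x\<in>V. \<exists>y\<in>V. x \<noteq> y \<and> A = S_hull V d {x, y})"

text \<open>d(X,Y): the common value of d(x,y) for x in X, y in Y (taken at chosen representatives).\<close>
definition dset :: "('a \<Rightarrow> 'a \<Rightarrow> 'w) \<Rightarrow> 'a set \<Rightarrow> 'a set \<Rightarrow> 'w" where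
  "dset d X Y = d (SOME x. x \<in> X) (SOME y. y \<in> Y)"

definition comp_equiv :: "'a set \<Rightarrow> ('a \<Rightarrow> 'a \<Rightarrow> 'w) \<Rightarrow> 'a set \<Rightarrow> 'a \<Rightarrow> 'a \<Rightarrow> bool" where
  "comp_equiv V d A x y \<longleftrightarrow> x \<in> A \<and> y \<in> A \<and>
     (x = y \<or> (\<exists>B. strong_module V d B \<and> x \<in> B \<and> y \<in> B \<and> B \<subset> A))"

definition components :: "'a set \<Rightarrow> ('a \<Rightarrow> 'a \<Rightarrow> 'w) \<Rightarrow> 'a set \<Rightarrow> 'a set set" where
  "components V d A = {{y. comp_equiv V d A x y} | x. x \<in> A}"

definition gallai_prime :: "'a set \<Rightarrow> ('a \<Rightarrow> 'a \<Rightarrow> 'w) \<Rightarrow> 'a set \<Rightarrow> bool" where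
  "gallai_prime V d A \<longleftrightarrow>
     (let C = components V d A in
       (\<exists>I J K. I \<in> C \<and> J \<in> C \<and> K \<in> C \<and> I \<noteq> J \<and> I \<noteq> K \<and> J \<noteq> K) \<and>
       (\<forall>\<A>. is_module C (dset d) \<A> \<longrightarrow> \<A> = {} \<or> (\<exists>I. \<A> = {I}) \<or> \<A> = C))"

definition gtype :: "'a set \<Rightarrow> ('a \<Rightarrow> 'a \<Rightarrow> 'w) \<Rightarrow> 'a set \<Rightarrow> 'w set" where
  "gtype V d A = {dset d I J | I J. I \<in> components V d A \<and> J \<in> components V d A \<and> I \<noteq> J}"

end

theory Submission
  imports Defs
begin

lemma mod_sub: "is_module V d A \<Longrightarrow> A \<subseteq> V" by (simp add: is_module_def)

lemma mod_eq1: "is_module V d A \<Longrightarrow> z \<in> V \<Longrightarrow> z \<notin> A \<Longrightarrow> u \<in> A \<Longrightarrow> u' \<in> A \<Longrightarrow> d z u = d z u'"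
  unfolding is_module_def by blast

lemma mod_eq2: "is_module V d A \<Longrightarrow> z \<in> V \<Longrightarrow> z \<notin> A \<Longrightarrow> u \<in> A \<Longrightarrow> u' \<in> A \<Longrightarrow> d u z = d u' z"
  unfolding is_module_def by blast

lemma mod_intro:
  assumes "A \<subseteq> V"
    and "\<And>z u u'. z \<in> V \<Longrightarrow> z \<notin> A \<Longrightarrow> u \<in> A \<Longrightarrow> u' \<in> A \<Longrightarrow> d z u = d z u' \<and> d u z = d u' z"
  shows "is_module V d A"
  using assms unfolding is_module_def by blast

lemma strongD: "strong_module V d A \<Longrightarrow> is_module V d B \<Longrightarrow> A \<subseteq> B \<or> B \<subseteq> A \<or> A \<inter> B = {}"
  unfolding strong_module_def by blast

lemma strong_mod: "strong_module V d A \<Longrightarrow> is_module V d A"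
  unfolding strong_module_def by blast

lemma mod_Union_common:
  assumes "\<And>Z. Z \<in> F \<Longrightarrow> is_module V d Z \<and> c \<in> Z"
  shows "is_module V d (\<Union>F)"
proof (rule mod_intro)
  show "\<Union>F \<subseteq> V" using assms mod_sub by blast
  fix z u u' assume z: "z \<in> V" "z \<notin> \<Union>F" and u: "u \<in> \<Union>F" "u' \<in> \<Union>F"
  then obtain Z Z' where Z: "Z \<in> F" "u \<in> Z" and Z': "Z' \<in> F" "u' \<in> Z'" by blast
  have m: "is_module V d Z" "c \<in> Z" "is_module V d Z'" "c \<in> Z'" using assms Z Z' by auto
  have "z \<notin> Z" "z \<notin> Z'" using z Z Z' by auto
  then have "d z u = d z c" "d u z = d c z" "d z u' = d z c" "d u' z = d c z"
    using mod_eq1[OF m(1) z(1) \<open>z \<notin> Z\<close> Z(2) m(2)] mod_eq2[OF m(1) z(1) \<open>z \<notin> Z\<close> Z(2) m(2)]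
      mod_eq1[OF m(3) z(1) \<open>z \<notin> Z'\<close> Z'(2) m(4)] mod_eq2[OF m(3) z(1) \<open>z \<notin> Z'\<close> Z'(2) m(4)]
    by simp_all
  then show "d z u = d z u' \<and> d u z = d u' z" by simp
qed

lemma mod_union2:
  assumes "is_module V d A" "is_module V d B" "A \<inter> B \<noteq> {}"
  shows "is_module V d (A \<union> B)"
proof -
  obtain c where c: "c \<in> A" "c \<in> B" using assms(3) by blast
  have "\<And>Z. Z \<in> {A,B} \<Longrightarrow> is_module V d Z \<and> c \<in> Z" using assms(1,2) c by blast
  then have "is_module V d (\<Union>{A,B})" by (rule mod_Union_common)
  then show ?thesis by simp
qed

lemma mod_diff:
  assumes A: "is_module V d A" and B: "is_module V d B" and nb: "\<not> B \<subseteq> A"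
  shows "is_module V d (A - B)"
proof (rule mod_intro)
  show "A - B \<subseteq> V" using A mod_sub by blast
  fix z u u' assume z: "z \<in> V" "z \<notin> A - B" and u: "u \<in> A - B" "u' \<in> A - B"
  have uA: "u \<in> A" "u' \<in> A" and unB: "u \<notin> B" "u' \<notin> B" using u by auto
  show "d z u = d z u' \<and> d u z = d u' z"
  proof (cases "z \<in> A")
    case False then show ?thesis
      using mod_eq1[OF A z(1) False uA] mod_eq2[OF A z(1) False uA] by simp
  next
    case True
    with z have zB: "z \<in> B" by blast
    obtain b where b: "b \<in> B" "b \<notin> A" using nb by blast
    have bV: "b \<in> V" using B b mod_sub by blast
    have uV: "u \<in> V" "u' \<in> V" using A uA mod_sub by blast+
    have "d z u = d b u" by (rule mod_eq2[OF B uV(1) unB(1) zB b(1)])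
    also have "\<dots> = d b u'" by (rule mod_eq1[OF A bV b(2) uA])
    also have "\<dots> = d z u'" by (rule mod_eq2[OF B uV(2) unB(2) b(1) zB])
    finally have 1: "d z u = d z u'" .
    have "d u z = d u b" by (rule mod_eq1[OF B uV(1) unB(1) zB b(1)])
    also have "\<dots> = d u' b" by (rule mod_eq2[OF A bV b(2) uA])
    also have "\<dots> = d u' z" by (rule mod_eq1[OF B uV(2) unB(2) b(1) zB])
    finally show ?thesis using 1 by simp
  qed
qed

lemma mod_single: "x \<in> V \<Longrightarrow> is_module V d {x}"
  unfolding is_module_def by auto

lemma mod_V: "is_module V d V"
  unfolding is_module_def by auto

lemma strong_V: "strong_module V d V"
  unfolding strong_module_def using mod_V mod_sub by blast

lemma S_hull_strong:
  assumes "x \<in> V" "y \<in> V"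
  shows "strong_module V d (S_hull V d {x,y})"
proof -
  define F where "F = {A. strong_module V d A \<and> {x,y} \<subseteq> A}"
  have VF: "V \<in> F" using strong_V assms unfolding F_def by blast
  have SF: "S_hull V d {x,y} = \<Inter>F" unfolding S_hull_def F_def by simp
  have mod: "is_module V d (\<Inter>F)"
  proof (rule mod_intro)
    show "\<Inter>F \<subseteq> V" using VF by blast
    fix z u u' assume z: "z \<in> V" "z \<notin> \<Inter>F" and u: "u \<in> \<Inter>F" "u' \<in> \<Inter>F"
    then obtain A where A: "A \<in> F" "z \<notin> A" by blast
    then have Am: "is_module V d A" unfolding F_def using strong_mod by blast
    have uA: "u \<in> A" "u' \<in> A" using u A(1) by blast+
    show "d z u = d z u' \<and> d u z = d u' z"
      using mod_eq1[OF Am z(1) A(2) uA] mod_eq2[OF Am z(1) A(2) uA] by simp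
  qed
  have "strong_module V d (\<Inter>F)"
    unfolding strong_module_def
  proof (intro conjI mod allI impI)
    fix B assume B: "is_module V d B"
    show "\<Inter>F \<subseteq> B \<or> B \<subseteq> \<Inter>F \<or> \<Inter>F \<inter> B = {}"
    proof (cases "\<exists>A\<in>F. A \<subseteq> B")
      case True then show ?thesis by blast
    next
      case False
      { assume ne: "\<Inter>F \<inter> B \<noteq> {}"
        have "B \<subseteq> A" if "A \<in> F" for A
        proof -
          have "strong_module V d A" using that unfolding F_def by blast
          from strongD[OF this B] False that ne show ?thesis by blast
        qed
        then have "B \<subseteq> \<Inter>F" by blast }
      then show ?thesis by blast
    qed
  qed
  then show ?thesis using SF by simp
qed

definition maxmod :: "'a set \<Rightarrow> ('a \<Rightarrow> 'a \<Rightarrow> 'w) \<Rightarrow> 'a \<Rightarrow> 'a \<Rightarrow> 'a set" where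
  "maxmod V d a b = \<Union>{Z. is_module V d Z \<and> a \<in> Z \<and> b \<notin> Z}"

lemma maxmod_mod: "is_module V d (maxmod V d a b)"
proof -
  have "\<And>Z. Z \<in> {Z. is_module V d Z \<and> a \<in> Z \<and> b \<notin> Z} \<Longrightarrow> is_module V d Z \<and> a \<in> Z" by blast
  then show ?thesis unfolding maxmod_def by (rule mod_Union_common)
qed

lemma maxmod_in: assumes "a \<in> V" "a \<noteq> b" shows "a \<in> maxmod V d a b"
proof -
  have "{a} \<in> {Z. is_module V d Z \<and> a \<in> Z \<and> b \<notin> Z}" using mod_single[OF assms(1)] assms(2) by simp
  then show ?thesis unfolding maxmod_def by blast
qed

lemma maxmod_notin: "b \<notin> maxmod V d a b"
  unfolding maxmod_def by blast

lemma maxmod_max: "is_module V d Z \<Longrightarrow> a \<in> Z \<Longrightarrow> b \<notin> Z \<Longrightarrow> Z \<subseteq> maxmod V d a b"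
  unfolding maxmod_def by blast

lemma maxmod_max':
  assumes "m \<in> maxmod V d a b" "is_module V d Z" "m \<in> Z" "b \<notin> Z" "a \<in> V" "a \<noteq> b"
  shows "Z \<subseteq> maxmod V d a b"
proof -
  have "Z \<inter> maxmod V d a b \<noteq> {}" using assms(1,3) by blast
  then have "is_module V d (Z \<union> maxmod V d a b)"
    using mod_union2[OF assms(2) maxmod_mod] by blast
  moreover have "a \<in> Z \<union> maxmod V d a b" using maxmod_in[OF assms(5,6)] by (rule UnI2)
  moreover have "b \<notin> Z \<union> maxmod V d a b" using assms(4) maxmod_notin[of b V d a] by simp
  ultimately have "Z \<union> maxmod V d a b \<subseteq> maxmod V d a b" by (rule maxmod_max)
  then show ?thesis by simp
qed

lemma union_strong:
  assumes M: "is_module V d M" "a \<in> M" "y \<notin> M"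
    and F1: "\<And>Z. is_module V d Z \<Longrightarrow> a \<in> Z \<Longrightarrow> y \<notin> Z \<Longrightarrow> Z \<subseteq> M"
    and M2: "is_module V d M2" "y \<in> M2" "a \<notin> M2"
    and F2: "\<And>Z. is_module V d Z \<Longrightarrow> y \<in> Z \<Longrightarrow> a \<notin> Z \<Longrightarrow> Z \<subseteq> M2"
    and ne: "M \<inter> M2 \<noteq> {}"
  shows "strong_module V d (M \<union> M2)"
  unfolding strong_module_def
proof (intro conjI allI impI)
  show Nm: "is_module V d (M \<union> M2)" using mod_union2 M M2 ne by blast
  fix B assume B: "is_module V d B"
  show "M \<union> M2 \<subseteq> B \<or> B \<subseteq> M \<union> M2 \<or> (M \<union> M2) \<inter> B = {}"
  proof (rule ccontr)
    assume "\<not> ?thesis"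
    then obtain e f where e: "e \<in> B" "e \<notin> M" "e \<notin> M2" and f: "f \<in> M \<union> M2" "f \<notin> B"
      and meet: "(M \<union> M2) \<inter> B \<noteq> {}" by blast
    have aB: "a \<in> B" if "M \<inter> B \<noteq> {}"
    proof (rule ccontr)
      assume na: "a \<notin> B"
      have "is_module V d (M \<union> B)" using mod_union2 M(1) B that by blast
      show False
      proof (cases "y \<in> B")
        case False
        then have "M \<union> B \<subseteq> M" using F1[OF \<open>is_module V d (M \<union> B)\<close>] M by blast
        then show False using e by blast
      next
        case True
        then have "B \<subseteq> M2" using F2[OF B] na by blast
        then show False using e by blast
      qed
    qed
    have yB: "y \<in> B" if "M2 \<inter> B \<noteq> {}"
    proof (rule ccontr)
      assume na: "y \<notin> B"
      have "is_module V d (M2 \<union> B)" using mod_union2 M2(1) B that by blast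
      show False
      proof (cases "a \<in> B")
        case False
        then have "M2 \<union> B \<subseteq> M2" using F2[OF \<open>is_module V d (M2 \<union> B)\<close>] M2 by blast
        then show False using e by blast
      next
        case True
        then have "B \<subseteq> M" using F1[OF B] na by blast
        then show False using e by blast
      qed
    qed
    have "a \<in> B \<or> y \<in> B" using aB yB meet by blast
    then have both: "a \<in> B" "y \<in> B"
      using F1[OF B] F2[OF B] e by blast+
    show False
    proof (cases "f \<in> M")
      case True
      have "is_module V d (B - M)" using mod_diff[OF B M(1)] True f by blast
      then have "B - M \<subseteq> M2" using F2 both M by blast
      then show False using e by blast
    next
      case False
      then have fM2: "f \<in> M2" using f by blast
      have "is_module V d (B - M2)" using mod_diff[OF B M2(1)] fM2 f by blast
      then have "B - M2 \<subseteq> M" using F1 both M2 by blast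
      then show False using e by blast
    qed
  qed
qed


locale SM =
  fixes V :: "'a set" and d :: "'a \<Rightarrow> 'a \<Rightarrow> 'w" and Y :: "'a set"
  assumes Ystr: "strong_module V d Y"
begin

abbreviation ceq where "ceq \<equiv> comp_equiv V d Y"

definition cls where "cls u = {v. ceq u v}"

lemma Ymod: "is_module V d Y" using Ystr strong_mod by blast
lemma YV: "Y \<subseteq> V" using Ymod mod_sub by blast

lemma ceq_Y: "ceq u v \<Longrightarrow> u \<in> Y \<and> v \<in> Y" unfolding comp_equiv_def by blast
lemma ceq_refl: "u \<in> Y \<Longrightarrow> ceq u u" unfolding comp_equiv_def by blast
lemma ceq_sym: "ceq u v \<Longrightarrow> ceq v u" unfolding comp_equiv_def by blast

lemma ceq_strong: "strong_module V d B \<Longrightarrow> B \<subset> Y \<Longrightarrow> u \<in> B \<Longrightarrow> v \<in> B \<Longrightarrow> ceq u v"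
  unfolding comp_equiv_def by blast

lemma ceq_trans: assumes "ceq u v" "ceq v w" shows "ceq u w"
proof (cases "u = v \<or> v = w")
  case True then show ?thesis using assms by blast
next
  case False
  obtain B1 where B1: "strong_module V d B1" "u \<in> B1" "v \<in> B1" "B1 \<subset> Y"
    using assms(1) False unfolding comp_equiv_def by blast
  obtain B2 where B2: "strong_module V d B2" "v \<in> B2" "w \<in> B2" "B2 \<subset> Y"
    using assms(2) False unfolding comp_equiv_def by blast
  from strongD[OF B1(1) strong_mod[OF B2(1)]] B1(3) B2(2)
  have "B1 \<subseteq> B2 \<or> B2 \<subseteq> B1" by blast
  then show ?thesis
  proof
    assume "B1 \<subseteq> B2" then show ?thesis using ceq_strong[OF B2(1) B2(4)] B1(2) B2(3) by blast
  next
    assume "B2 \<subseteq> B1" then show ?thesis using ceq_strong[OF B1(1) B1(4)] B1(2) B2(3) by blast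
  qed
qed

lemma cls_eq: assumes "ceq a c" shows "cls a = cls c"
proof -
  have "ceq c a" using assms by (rule ceq_sym)
  show ?thesis unfolding cls_def
  proof (intro set_eqI iffI; simp)
    fix x assume "ceq a x" then show "ceq c x" using ceq_trans[OF \<open>ceq c a\<close>] by blast
  next
    fix x assume "ceq c x" then show "ceq a x" using ceq_trans[OF assms] by blast
  qed
qed

lemma cls_self: "u \<in> Y \<Longrightarrow> u \<in> cls u" unfolding cls_def using ceq_refl by blast

lemma cls_module: assumes "u \<in> Y" shows "is_module V d (cls u)"
proof -
  have eq: "cls u = \<Union>({{u}} \<union> {B. strong_module V d B \<and> u \<in> B \<and> B \<subset> Y})"
    using assms unfolding cls_def comp_equiv_def by blast
  have "is_module V d (\<Union>({{u}} \<union> {B. strong_module V d B \<and> u \<in> B \<and> B \<subset> Y}))"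
  proof (rule mod_Union_common[where c=u])
    fix Z assume "Z \<in> {{u}} \<union> {B. strong_module V d B \<and> u \<in> B \<and> B \<subset> Y}"
    then show "is_module V d Z \<and> u \<in> Z"
    proof
      assume "Z \<in> {{u}}" then show ?thesis using mod_single[of u V d] assms YV by blast
    next
      assume "Z \<in> {B. strong_module V d B \<and> u \<in> B \<and> B \<subset> Y}"
      then show ?thesis using strong_mod by blast
    qed
  qed
  then show ?thesis using eq by simp
qed

lemma DL: assumes "u \<in> Y" "v \<in> Y" "\<not> ceq u v" "u' \<in> cls u" "v' \<in> cls v"
  shows "d u' v' = d u v"
proof -
  have v'Y: "v' \<in> Y" and u'Y: "u' \<in> Y" using assms ceq_Y unfolding cls_def by blast+
  have "v' \<notin> cls u" using assms ceq_trans ceq_sym unfolding cls_def by blast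
  then have "d u' v' = d u v'"
    using mod_eq2[OF cls_module[OF assms(1)]] YV v'Y assms cls_self by blast
  moreover have "u \<notin> cls v" using assms ceq_sym unfolding cls_def by blast
  then have "d u v' = d u v"
    using mod_eq1[OF cls_module[OF assms(2)]] YV assms cls_self by blast
  ultimately show ?thesis by simp
qed

lemma dset_cls: assumes "u \<in> Y" "v \<in> Y" "\<not> ceq u v"
  shows "dset d (cls u) (cls v) = d u v"
  unfolding dset_def
  apply (rule DL[OF assms])
  using cls_self assms by (metis someI_ex)+

lemma comps_eq: "components V d Y = {cls x | x. x \<in> Y}"
  by (simp add: components_def cls_def)

lemma gtype_mem: assumes "u \<in> Y" "v \<in> Y" "\<not> ceq u v" shows "d u v \<in> gtype V d Y"
proof -
  have "cls u \<noteq> cls v" using assms cls_self unfolding cls_def by blast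
  moreover have "cls u \<in> {cls x | x. x \<in> Y}" "cls v \<in> {cls x | x. x \<in> Y}" using assms by blast+
  ultimately have "dset d (cls u) (cls v) \<in> gtype V d Y" unfolding gtype_def comps_eq by blast
  then show ?thesis using dset_cls[OF assms] by simp
qed

lemma gtype_elim: assumes "w \<in> gtype V d Y"
  obtains u v where "u \<in> Y" "v \<in> Y" "\<not> ceq u v" "d u v = w"
proof -
  obtain u v where uv: "u \<in> Y" "v \<in> Y" "cls u \<noteq> cls v" "w = dset d (cls u) (cls v)"
    using assms unfolding gtype_def comps_eq by blast
  then have "\<not> ceq u v" using cls_eq by blast
  then show ?thesis using that uv dset_cls by metis
qed

lemma sat: assumes Z: "is_module V d Z" "Z \<subseteq> Y" and u12: "u1 \<in> Z" "u2 \<in> Z" "\<not> ceq u1 u2"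
  and u: "u \<in> Z" "ceq u v" shows "v \<in> Z"
proof (cases "u = v")
  case True then show ?thesis using u by simp
next
  case False
  then obtain B where B: "strong_module V d B" "u \<in> B" "v \<in> B" "B \<subset> Y"
    using u unfolding comp_equiv_def by blast
  from strongD[OF B(1) Z(1)] B u u12 ceq_strong show ?thesis by blast
qed

lemma conn:
  assumes PY: "P \<subseteq> Y" and p0: "p0 \<in> P" and s0: "s0 \<in> Y - P"
    and sep: "\<And>u v. u \<in> P \<Longrightarrow> v \<in> Y - P \<Longrightarrow> d u v = w \<and> d v u = w \<and> \<not> ceq u v"
    and ij: "i0 \<in> Y" "j0 \<in> Y" "\<not> ceq i0 j0" "d i0 j0 \<noteq> w"
  shows False
proof -
  define adj where "adj u v \<longleftrightarrow> u \<in> Y \<and> v \<in> Y \<and> (ceq u v \<or> d u v \<noteq> w \<or> d v u \<noteq> w)" for u v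
  have adj_sym: "adj u v \<Longrightarrow> adj v u" for u v unfolding adj_def using ceq_sym by blast
  define K where "K = {v. adj\<^sup>*\<^sup>* i0 v}"
  have KY: "v \<in> Y" if "v \<in> K" for v
  proof -
    have "adj\<^sup>*\<^sup>* i0 v" using that K_def by simp
    then show ?thesis by induct (use ij adj_def in auto)
  qed
  have i0K: "i0 \<in> K" unfolding K_def by simp
  have K2: "d k z = w \<and> d z k = w \<and> \<not> ceq k z" if "k \<in> K" "z \<in> Y" "z \<notin> K" for k z
  proof -
    have "\<not> adj k z"
    proof
      assume "adj k z"
      then have "adj\<^sup>*\<^sup>* i0 z" using that K_def by (metis mem_Collect_eq rtranclp.rtrancl_into_rtrancl)
      then show False using that K_def by simp
    qed
    then show ?thesis using that KY unfolding adj_def by blast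
  qed
  have K3: "v \<in> P \<longleftrightarrow> i0 \<in> P" if "v \<in> K" for v
  proof -
    have "adj\<^sup>*\<^sup>* i0 v" using that K_def by simp
    then show ?thesis
    proof induct
      case base then show ?case by simp
    next
      case (step y z)
      have "y \<in> P \<longleftrightarrow> z \<in> P"
      proof (rule ccontr)
        assume "\<not> (y \<in> P \<longleftrightarrow> z \<in> P)"
        moreover have "y \<in> Y" "z \<in> Y" using step(2) adj_def by auto
        ultimately show False using sep[of y z] sep[of z y] step(2) ceq_sym unfolding adj_def by blast
      qed
      then show ?case using step by blast
    qed
  qed
  have KneY: "K \<noteq> Y"
  proof
    assume "K = Y"
    then have "p0 \<in> K" "s0 \<in> K" using p0 s0 PY by auto
    then show False using K3 p0 s0 by blast
  qed
  have j0K: "j0 \<in> K"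
  proof -
    have "adj i0 j0" using ij adj_def by blast
    then show ?thesis unfolding K_def by simp
  qed
  have Kmod: "is_module V d K"
  proof (rule mod_intro)
    show "K \<subseteq> V" using KY YV by blast
    fix z u u' assume z: "z \<in> V" "z \<notin> K" and u: "u \<in> K" "u' \<in> K"
    show "d z u = d z u' \<and> d u z = d u' z"
    proof (cases "z \<in> Y")
      case True then show ?thesis using K2 z u by metis
    next
      case False then show ?thesis using mod_eq1[OF Ymod z(1)] mod_eq2[OF Ymod z(1)] u KY by blast
    qed
  qed
  have Kstr: "strong_module V d K"
    unfolding strong_module_def
  proof (intro conjI Kmod allI impI)
    fix B assume B: "is_module V d B"
    show "K \<subseteq> B \<or> B \<subseteq> K \<or> K \<inter> B = {}"
    proof (rule ccontr)
      assume "\<not> ?thesis"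
      then obtain k k' b where k: "k \<in> K" "k \<in> B" and k': "k' \<in> K" "k' \<notin> B" and b: "b \<in> B" "b \<notin> K"
        by blast
      have "B \<subseteq> Y" using strongD[OF Ystr B] k k' KY by blast
      then have bY: "b \<in> Y" using b by blast
      have NA: "\<not> adj u v" if uv: "u \<in> K" "u \<notin> B" "v \<in> K" "v \<in> B" for u v
      proof
        assume a: "adj u v"
        have uV: "u \<in> V" using uv KY YV by blast
        have "d u v = d u b" using mod_eq1[OF B uV uv(2)] uv b by blast
        also have "\<dots> = w" using K2[OF uv(1) bY b(2)] by simp
        finally have 1: "d u v = w" .
        have "d v u = d b u" using mod_eq2[OF B uV uv(2)] uv b by blast
        also have "\<dots> = w" using K2[OF uv(1) bY b(2)] by simp
        finally have 2: "d v u = w" .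
        have c: "ceq u v" using a 1 2 adj_def by blast
        have "u \<noteq> v" using uv by blast
        then obtain B0 where B0: "strong_module V d B0" "u \<in> B0" "v \<in> B0" "B0 \<subset> Y"
          using c unfolding comp_equiv_def by blast
        from strongD[OF B0(1) B] B0 uv have "B \<subseteq> B0" by blast
        then have "ceq u b" using ceq_strong[OF B0(1) B0(4)] B0 b by blast
        then show False using K2[OF uv(1) bY b(2)] by blast
      qed
      have K4: "v \<in> B \<longleftrightarrow> i0 \<in> B" if "v \<in> K" for v
      proof -
        have "adj\<^sup>*\<^sup>* i0 v" using that K_def by simp
        then show ?thesis
        proof induct
          case base then show ?case by simp
        next
          case (step y z)
          have yK: "y \<in> K" "z \<in> K" using step K_def
            by (auto intro: rtranclp.rtrancl_into_rtrancl)
          have "y \<in> B \<longleftrightarrow> z \<in> B" using NA[of y z] NA[of z y] step(2) adj_sym yK by blast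
          then show ?case using step by blast
        qed
      qed
      show False using K4 k k' by blast
    qed
  qed
  have "K \<subset> Y" using KY KneY by blast
  then have "ceq i0 j0" using ceq_strong[OF Kstr] i0K j0K by blast
  then show False using ij by blast
qed

end


locale SMX = SM V d Y for V :: "'a set" and d :: "'a \<Rightarrow> 'a \<Rightarrow> 'w" and Y +
  fixes X :: "'a set"
  assumes Xmod: "is_module V d X" and disj: "X \<inter> Y = {}" and Xne: "X \<noteq> {}" and Yne: "Y \<noteq> {}"
    and XYmod: "is_module V d (X \<union> Y)"
    and gt: "{dset d X Y, dset d Y X} = gtype V d Y"
begin

lemma dXY: assumes "x \<in> X" "y \<in> Y" shows "d x y = dset d X Y \<and> d y x = dset d Y X"
proof -
  obtain x0 where x0: "x0 = (SOME x. x \<in> X)" by blast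
  obtain y0 where y0: "y0 = (SOME y. y \<in> Y)" by blast
  have x0X: "x0 \<in> X" using x0 assms by (metis someI_ex)
  have y0Y: "y0 \<in> Y" using y0 assms by (metis someI_ex)
  have xV: "x \<in> V" "x0 \<in> V" using Xmod mod_sub assms x0X by blast+
  have yV: "y0 \<in> V" using YV y0Y by blast
  have xnY: "x \<notin> Y" "x0 \<notin> Y" using disj assms x0X by blast+
  have ynX: "y0 \<notin> X" using disj y0Y by blast
  have "d x y = d x y0" using mod_eq1[OF Ymod xV(1) xnY(1)] assms y0Y by blast
  also have "\<dots> = d x0 y0" using mod_eq2[OF Xmod yV ynX] assms x0X by blast
  finally have 1: "d x y = dset d X Y" unfolding dset_def x0 y0 .
  have "d y x = d y0 x" using mod_eq2[OF Ymod xV(1) xnY(1)] assms y0Y by blast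
  also have "\<dots> = d y0 x0" using mod_eq1[OF Xmod yV ynX] assms x0X by blast
  finally have 2: "d y x = dset d Y X" unfolding dset_def x0 y0 .
  show ?thesis using 1 2 by simp
qed

lemma cut: assumes U: "U \<subseteq> Y" "U \<noteq> {}" "Y - U \<noteq> {}"
  and h: "\<And>u z. u \<in> U \<Longrightarrow> z \<in> Y - U \<Longrightarrow> d u z = dset d X Y \<and> d z u = dset d Y X"
  shows False
proof -
  have "is_module V d (X \<union> U)"
  proof (rule mod_intro)
    show "X \<union> U \<subseteq> V" using Xmod mod_sub U YV by blast
    fix z u u' assume z: "z \<in> V" "z \<notin> X \<union> U" and u: "u \<in> X \<union> U" "u' \<in> X \<union> U"
    show "d z u = d z u' \<and> d u z = d u' z"
    proof (cases "z \<in> Y")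
      case False
      then have "z \<notin> X \<union> Y" using z by blast
      then show ?thesis using mod_eq1[OF XYmod z(1)] mod_eq2[OF XYmod z(1)] u U by blast
    next
      case True
      then have zz: "z \<in> Y - U" using z by blast
      have "d z v = dset d Y X \<and> d v z = dset d X Y" if "v \<in> X \<union> U" for v
        using that dXY h zz True by blast
      then show ?thesis using u by simp
    qed
  qed
  from strongD[OF Ystr this] U Xne disj show False by blast
qed

lemma fin:
  assumes M: "is_module V d M" "M \<subseteq> Y" and satM: "\<And>u v. u \<in> M \<Longrightarrow> ceq u v \<Longrightarrow> v \<in> M"
    and M2: "is_module V d M2" "M2 \<subseteq> Y" and satM2: "\<And>u v. u \<in> M2 \<Longrightarrow> ceq u v \<Longrightarrow> v \<in> M2"
    and un: "M \<union> M2 = Y" and p0: "p0 \<in> M" "p0 \<notin> M2" and s0: "s0 \<in> M2" "s0 \<notin> M"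
  shows False
proof -
  define w1 where "w1 = dset d X Y"
  define w2 where "w2 = dset d Y X"
  define \<alpha> where "\<alpha> = d p0 s0"
  define \<beta> where "\<beta> = d s0 p0"
  have nc: "\<not> ceq p0 s0" using satM p0 s0 by blast
  have nc': "\<not> ceq s0 p0" using nc ceq_sym by blast
  have Y: "p0 \<in> Y" "s0 \<in> Y" using M M2 p0 s0 by blast+
  have gt': "gtype V d Y = {w1, w2}" using gt unfolding w1_def w2_def by simp
  have ab: "\<alpha> \<in> {w1, w2}" "\<beta> \<in> {w1,w2}"
    using gtype_mem[OF Y nc] gtype_mem[OF Y(2,1) nc'] unfolding gt' \<alpha>_def \<beta>_def by simp_all
  have P1: "d p z = \<alpha> \<and> d z p = \<beta>" if "p \<in> M" "p \<notin> M2" "z \<in> M2" for p z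
  proof -
    have pV: "p \<in> V" and s0V: "s0 \<in> V" using that M YV s0 M2 by blast+
    have "d p z = d p s0" using mod_eq1[OF M2(1) pV that(2)] that s0 by blast
    also have "\<dots> = d p0 s0" using mod_eq2[OF M(1) s0V s0(2)] that p0 by blast
    finally have 1: "d p z = \<alpha>" unfolding \<alpha>_def .
    have "d z p = d s0 p" using mod_eq2[OF M2(1) pV that(2)] that s0 by blast
    also have "\<dots> = d s0 p0" using mod_eq1[OF M(1) s0V s0(2)] that p0 by blast
    finally show ?thesis using 1 unfolding \<beta>_def by simp
  qed
  have S1: "d z s = \<alpha> \<and> d s z = \<beta>" if "s \<in> M2" "s \<notin> M" "z \<in> M" for s z
  proof -
    have sV: "s \<in> V" and p0V: "p0 \<in> V" using that M2 YV p0 M by blast+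
    have "d z s = d p0 s" using mod_eq2[OF M(1) sV that(2)] that p0 by blast
    also have "\<dots> = d p0 s0" using mod_eq1[OF M2(1) p0V p0(2)] that s0 by blast
    finally have 1: "d z s = \<alpha>" unfolding \<alpha>_def .
    have "d s z = d s p0" using mod_eq1[OF M(1) sV that(2)] that p0 by blast
    also have "\<dots> = d s0 p0" using mod_eq2[OF M2(1) p0V p0(2)] that s0 by blast
    finally show ?thesis using 1 unfolding \<beta>_def by simp
  qed
  show False
  proof (cases "\<alpha> = w1 \<and> \<beta> = w2")
    case True
    show False
    proof (rule cut[of "M - M2"])
      show "M - M2 \<subseteq> Y" "M - M2 \<noteq> {}" "Y - (M - M2) \<noteq> {}" using M p0 s0 Y by blast+
      fix u z assume uz: "u \<in> M - M2" "z \<in> Y - (M - M2)"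
      then have "z \<in> M2" using un by blast
      then have "d u z = \<alpha> \<and> d z u = \<beta>" using P1[of u z] uz by blast
      then show "d u z = dset d X Y \<and> d z u = dset d Y X"
        using True unfolding w1_def w2_def by simp
    qed
  next
    case F1: False
    show False
    proof (cases "\<alpha> = w2 \<and> \<beta> = w1")
      case True
      show False
      proof (rule cut[of "M2 - M"])
        show "M2 - M \<subseteq> Y" "M2 - M \<noteq> {}" "Y - (M2 - M) \<noteq> {}" using M2 p0 s0 Y by blast+
        fix u z assume uz: "u \<in> M2 - M" "z \<in> Y - (M2 - M)"
        then have "z \<in> M" using un by blast
        then have "d z u = \<alpha> \<and> d u z = \<beta>" using S1[of u z] uz by blast
        then show "d u z = dset d X Y \<and> d z u = dset d Y X"
          using True unfolding w1_def w2_def by simp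
      qed
    next
      case F2: False
      have eq: "\<beta> = \<alpha>" using ab F1 F2 by auto
      have "w1 \<noteq> w2" using ab F1 F2 by auto
      then have "\<exists>w'. w' \<in> {w1, w2} \<and> w' \<noteq> \<alpha>" by auto
      then obtain w' where w': "w' \<in> gtype V d Y" "w' \<noteq> \<alpha>"
        unfolding gt' by blast
      obtain i0 j0 where ij: "i0 \<in> Y" "j0 \<in> Y" "\<not> ceq i0 j0" "d i0 j0 = w'"
        using gtype_elim[OF w'(1)] by blast
      show False
      proof (rule conn[of "M - M2" p0 s0 \<alpha> i0 j0])
        show "M - M2 \<subseteq> Y" "p0 \<in> M - M2" "s0 \<in> Y - (M - M2)" using M p0 s0 Y by blast+
        show "i0 \<in> Y" "j0 \<in> Y" "\<not> ceq i0 j0" "d i0 j0 \<noteq> \<alpha>" using ij w' by auto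
        fix u v assume uv: "u \<in> M - M2" "v \<in> Y - (M - M2)"
        then have vM2: "v \<in> M2" using un by blast
        have "\<not> ceq u v"
        proof
          assume "ceq u v"
          then have "v \<in> M" using satM uv by blast
          moreover have "ceq v u" using \<open>ceq u v\<close> ceq_sym by blast
          ultimately show False using satM2 vM2 uv by blast
        qed
        then show "d u v = \<alpha> \<and> d v u = \<alpha> \<and> \<not> ceq u v" using P1[of u v] uv vM2 eq by blast
      qed
    qed
  qed
qed

lemma clsC: "x \<in> Y \<Longrightarrow> cls x \<in> components V d Y"
  unfolding comps_eq by blast

lemma Cobtain: assumes "I \<in> components V d Y" obtains x where "x \<in> Y" "I = cls x"
  using assms unfolding comps_eq by blast

lemma main: assumes np: "\<not> gallai_prime V d Y" shows False
proof -
  have "dset d X Y \<in> gtype V d Y" using gt by blast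
  then obtain u1 u2 where u: "u1 \<in> Y" "u2 \<in> Y" "\<not> ceq u1 u2" by (rule gtype_elim)
  define C where "C = components V d Y"
  have satcls: "v \<in> cls a" if "u \<in> cls a" "ceq u v" for a u v
  proof -
    have "ceq a u" using that(1) unfolding cls_def by simp
    then have "ceq a v" using ceq_trans that(2) by blast
    then show ?thesis unfolding cls_def by simp
  qed
  have clsY: "cls a \<subseteq> Y" for a
  proof
    fix x assume "x \<in> cls a" then have "ceq a x" unfolding cls_def by simp
    then show "x \<in> Y" using ceq_Y by blast
  qed
  have np': "\<not> (\<exists>I J K. I \<in> C \<and> J \<in> C \<and> K \<in> C \<and> I \<noteq> J \<and> I \<noteq> K \<and> J \<noteq> K) \<or>
      \<not> (\<forall>\<A>. is_module C (dset d) \<A> \<longrightarrow> \<A> = {} \<or> (\<exists>I. \<A> = {I}) \<or> \<A> = C)"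
    using np unfolding gallai_prime_def Let_def C_def by simp
  then show False
  proof
    assume no3: "\<not> (\<exists>I J K. I \<in> C \<and> J \<in> C \<and> K \<in> C \<and> I \<noteq> J \<and> I \<noteq> K \<and> J \<noteq> K)"
    have u2n: "u2 \<notin> cls u1" using u(3) unfolding cls_def by simp
    have u1n: "u1 \<notin> cls u2"
    proof
      assume "u1 \<in> cls u2" then have "ceq u2 u1" unfolding cls_def by simp
      then show False using u(3) ceq_sym by blast
    qed
    have ne: "cls u1 \<noteq> cls u2" using u2n cls_self[OF u(2)] by blast
    have un: "cls u1 \<union> cls u2 = Y"
    proof
      show "cls u1 \<union> cls u2 \<subseteq> Y" using clsY by blast
      show "Y \<subseteq> cls u1 \<union> cls u2"
      proof
        fix y assume y: "y \<in> Y"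
        have inC: "cls y \<in> C" "cls u1 \<in> C" "cls u2 \<in> C" using clsC y u unfolding C_def by blast+
        have "cls y = cls u1 \<or> cls y = cls u2"
        proof (rule ccontr)
          assume "\<not> (cls y = cls u1 \<or> cls y = cls u2)"
          then have "cls u1 \<noteq> cls u2 \<and> cls u1 \<noteq> cls y \<and> cls u2 \<noteq> cls y" using ne by auto
          then show False using no3 inC by blast
        qed
        then show "y \<in> cls u1 \<union> cls u2" using cls_self[OF y] by blast
      qed
    qed
    show False
    proof (rule fin[of "cls u1" "cls u2" u1 u2])
      show "is_module V d (cls u1)" "is_module V d (cls u2)" using cls_module u by blast+
      show "cls u1 \<subseteq> Y" "cls u2 \<subseteq> Y" using clsY by blast+
      show "\<And>u v. u \<in> cls u1 \<Longrightarrow> ceq u v \<Longrightarrow> v \<in> cls u1" using satcls by blast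
      show "\<And>u v. u \<in> cls u2 \<Longrightarrow> ceq u v \<Longrightarrow> v \<in> cls u2" using satcls by blast
      show "cls u1 \<union> cls u2 = Y" by (rule un)
      show "u1 \<in> cls u1" "u2 \<in> cls u2" using cls_self u by blast+
      show "u1 \<notin> cls u2" "u2 \<notin> cls u1" using u1n u2n by blast+
    qed
  next
    assume "\<not> (\<forall>\<A>. is_module C (dset d) \<A> \<longrightarrow> \<A> = {} \<or> (\<exists>I. \<A> = {I}) \<or> \<A> = C)"
    then obtain \<A> where A: "is_module C (dset d) \<A>" "\<A> \<noteq> {}" "\<not> (\<exists>I. \<A> = {I})" "\<A> \<noteq> C" by blast
    have AC: "\<A> \<subseteq> C" using A(1) by (rule mod_sub)
    obtain I1 where I1: "I1 \<in> \<A>" using A(2) by blast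
    obtain I2 where I2: "I2 \<in> \<A>" "I2 \<noteq> I1"
    proof -
      have "\<A> \<noteq> {I1}" using A(3) by blast
      then show ?thesis using that I1 by blast
    qed
    obtain K where K: "K \<in> C" "K \<notin> \<A>" using A(4) AC by blast
    obtain a where a: "a \<in> Y" "I1 = cls a" using I1 AC Cobtain unfolding C_def by blast
    obtain c where c: "c \<in> Y" "I2 = cls c" using I2 AC Cobtain unfolding C_def by blast
    obtain y0 where y0: "y0 \<in> Y" "K = cls y0" using K Cobtain unfolding C_def by blast
    have nac: "\<not> ceq a c"
    proof
      assume "ceq a c" then have "cls a = cls c" by (rule cls_eq)
      then show False using I2 a c by simp
    qed
    define A where "A = \<Union>\<A>"
    have clsA: "cls u \<in> \<A>" if uA: "u \<in> A" for u
    proof -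
      obtain I where I: "I \<in> \<A>" "u \<in> I" using uA A_def by blast
      then have "I \<in> C" using AC by blast
      then obtain u0 where u0: "u0 \<in> Y" "I = cls u0" using Cobtain unfolding C_def by blast
      then have "ceq u0 u" using I unfolding cls_def by simp
      then have "cls u0 = cls u" by (rule cls_eq)
      then show ?thesis using I u0 by simp
    qed
    have AY: "A \<subseteq> Y"
    proof
      fix u assume "u \<in> A"
      then obtain I where I: "I \<in> \<A>" "u \<in> I" using A_def by blast
      then have "I \<in> C" using AC by blast
      then obtain u0 where u0: "u0 \<in> Y" "I = cls u0" using Cobtain unfolding C_def by blast
      then show "u \<in> Y" using clsY I by blast
    qed
    have Amod: "is_module V d A"
    proof (rule mod_intro)
      show "A \<subseteq> V" using AY YV by blast
      fix z u u' assume z: "z \<in> V" "z \<notin> A" and u: "u \<in> A" "u' \<in> A"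
      have uY: "u \<in> Y" "u' \<in> Y" using u AY by blast+
      show "d z u = d z u' \<and> d u z = d u' z"
      proof (cases "z \<in> Y")
        case False then show ?thesis using mod_eq1[OF Ymod z(1) False uY] mod_eq2[OF Ymod z(1) False uY] by simp
      next
        case True
        have zC: "cls z \<in> C" using clsC True unfolding C_def by blast
        have zA: "cls z \<notin> \<A>"
        proof
          assume "cls z \<in> \<A>" then have "z \<in> A" using cls_self[OF True] A_def by blast
          then show False using z by blast
        qed
        have ncz: "\<not> ceq z v" if "v \<in> A" for v
        proof
          assume "ceq z v" then have "cls z = cls v" by (rule cls_eq)
          then show False using clsA[OF that] zA by simp
        qed
        have ncz': "\<not> ceq v z" if "v \<in> A" for v
        proof
          assume "ceq v z" then have "ceq z v" by (rule ceq_sym)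
          then show False using ncz that by blast
        qed
        have uC: "cls u \<in> \<A>" "cls u' \<in> \<A>" using clsA u by blast+
        have "d z u = dset d (cls z) (cls u)" using dset_cls[OF True uY(1) ncz[OF u(1)]] by simp
        also have "\<dots> = dset d (cls z) (cls u')" by (rule mod_eq1[OF A(1) zC zA uC])
        also have "\<dots> = d z u'" using dset_cls[OF True uY(2) ncz[OF u(2)]] by simp
        finally have 1: "d z u = d z u'" .
        have "d u z = dset d (cls u) (cls z)" using dset_cls[OF uY(1) True ncz'[OF u(1)]] by simp
        also have "\<dots> = dset d (cls u') (cls z)" by (rule mod_eq2[OF A(1) zC zA uC])
        also have "\<dots> = d u' z" using dset_cls[OF uY(2) True ncz'[OF u(2)]] by simp
        finally show ?thesis using 1 by simp
      qed
    qed
    have aA: "a \<in> A" using I1 a cls_self A_def by blast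
    have cA: "c \<in> A" using I2 c cls_self A_def by blast
    have y0A: "y0 \<notin> A"
    proof
      assume "y0 \<in> A" then have "cls y0 \<in> \<A>" by (rule clsA)
      then show False using K y0 by simp
    qed
    have ay: "a \<noteq> y0" using aA y0A by blast
    have aV: "a \<in> V" "y0 \<in> V" using a y0 YV by blast+
    define M where "M = maxmod V d a y0"
    have Mm: "is_module V d M" "a \<in> M" "y0 \<notin> M"
      unfolding M_def using maxmod_mod[of V d a y0] maxmod_in[OF aV(1) ay, of d] maxmod_notin[of y0 V d a] by simp_all
    have AM: "A \<subseteq> M" unfolding M_def by (rule maxmod_max[OF Amod aA y0A])
    have MY: "M \<subseteq> Y"
    proof -
      have "Y \<subseteq> M \<or> M \<subseteq> Y \<or> Y \<inter> M = {}" by (rule strongD[OF Ystr Mm(1)])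
      then show ?thesis using Mm(2,3) a(1) y0(1) by blast
    qed
    have satM: "\<And>u v. u \<in> M \<Longrightarrow> ceq u v \<Longrightarrow> v \<in> M"
    proof -
      fix u v assume "u \<in> M" "ceq u v"
      then show "v \<in> M" using sat[OF Mm(1) MY, of a c u v] AM aA cA nac by blast
    qed
    have "\<not> strong_module V d M"
    proof
      assume st: "strong_module V d M"
      have "M \<subset> Y" using MY Mm(3) y0(1) by blast
      then have "ceq a c" using ceq_strong[OF st] AM aA cA by blast
      then show False using nac by blast
    qed
    then obtain D where D: "is_module V d D" "\<not> (M \<subseteq> D \<or> D \<subseteq> M \<or> M \<inter> D = {})"
      unfolding strong_module_def using Mm(1) by blast
    have y0D: "y0 \<in> D"
    proof (rule ccontr)
      assume yD: "y0 \<notin> D"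
      have "M \<inter> D \<noteq> {}" using D(2) by blast
      then have MD: "is_module V d (M \<union> D)" using mod_union2[OF Mm(1) D(1)] by blast
      have i: "a \<in> M \<union> D" "y0 \<notin> M \<union> D" using Mm yD by blast+
      have "M \<union> D \<subseteq> maxmod V d a y0" by (rule maxmod_max[OF MD i])
      then have "M \<union> D \<subseteq> M" unfolding M_def .
      then show False using D by blast
    qed
    obtain m where m: "m \<in> M" "m \<notin> D" using D by blast
    obtain d0 where d0: "d0 \<in> M" "d0 \<in> D" using D by blast
    have my: "m \<noteq> y0" using m Mm by blast
    have mV: "m \<in> V" using m MY YV by blast
    define M2 where "M2 = maxmod V d y0 m"
    have M2m: "is_module V d M2" "y0 \<in> M2" "m \<notin> M2"
      unfolding M2_def using maxmod_mod[of V d y0 m] maxmod_in[OF aV(2), of m d] my maxmod_notin[of m V d y0] by simp_all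
    have DM2: "D \<subseteq> M2" unfolding M2_def by (rule maxmod_max[OF D(1) y0D m(2)])
    have F1: "Z \<subseteq> M" if "is_module V d Z" "m \<in> Z" "y0 \<notin> Z" for Z
      unfolding M_def by (rule maxmod_max'[OF m(1)[unfolded M_def] that aV(1) ay])
    have F2: "Z \<subseteq> M2" if "is_module V d Z" "y0 \<in> Z" "m \<notin> Z" for Z
      unfolding M2_def by (rule maxmod_max[OF that])
    have MM2: "M \<inter> M2 \<noteq> {}" using d0 DM2 by blast
    have Nstr: "strong_module V d (M \<union> M2)"
      by (rule union_strong[OF Mm(1) m(1) Mm(3) F1 M2m(1) M2m(2) M2m(3) F2 MM2])
    have M2Y: "M2 \<subseteq> Y"
    proof -
      have "Y \<subseteq> M2 \<or> M2 \<subseteq> Y \<or> Y \<inter> M2 = {}" by (rule strongD[OF Ystr M2m(1)])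
      then show ?thesis using M2m m MY y0(1) by blast
    qed
    have nmy: "\<not> ceq m y0" using satM m(1) Mm(3) by blast
    have un: "M \<union> M2 = Y"
    proof (rule ccontr)
      assume "M \<union> M2 \<noteq> Y"
      then have "M \<union> M2 \<subset> Y" using MY M2Y by blast
      then have "ceq m y0" using ceq_strong[OF Nstr] m M2m by blast
      then show False using nmy by blast
    qed
    have nyd: "\<not> ceq y0 d0"
    proof
      assume "ceq y0 d0"
      then have "ceq d0 y0" by (rule ceq_sym)
      then show False using satM d0 Mm by blast
    qed
    have satM2: "\<And>u v. u \<in> M2 \<Longrightarrow> ceq u v \<Longrightarrow> v \<in> M2"
    proof -
      fix u v assume "u \<in> M2" "ceq u v"
      then show "v \<in> M2" using sat[OF M2m(1) M2Y, of y0 d0 u v] M2m(2) DM2 d0 nyd by blast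
    qed
    show False
      using fin[OF Mm(1) MY satM M2m(1) M2Y satM2 un m(1) M2m(3) M2m(2) Mm(3)] .
  qed
qed

end

theorem lemma6p9:
  fixes V :: "'a set" and d :: "'a \<Rightarrow> 'a \<Rightarrow> 'w" and X Y :: "'a set"
  assumes "is_module V d X" and "is_module V d Y"
    and "X \<inter> Y = {}" and "X \<noteq> {}" and "Y \<noteq> {}"
    and "robust_module V d Y"
    and "\<exists>a\<in>Y. \<exists>b\<in>Y. a \<noteq> b"
    and "\<not> gallai_prime V d Y"
    and "{dset d X Y, dset d Y X} = gtype V d Y"
  shows "\<not> is_module V d (X \<union> Y)"
proof
  assume XY: "is_module V d (X \<union> Y)"
  have str: "strong_module V d Y"
  proof -
    from assms(6) consider (s) "\<exists>x\<in>V. Y = {x}" | (h) "\<exists>x\<in>V. \<exists>y\<in>V. x \<noteq> y \<and> Y = S_hull V d {x, y}"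
      unfolding robust_module_def by blast
    then show ?thesis
    proof cases
      case s then show ?thesis using assms(7) by blast
    next
      case h then show ?thesis using S_hull_strong by metis
    qed
  qed
  have "SMX V d Y X"
    unfolding SMX_def SMX_axioms_def SM_def
    using str assms(1,3,4,5,9) XY by blast
  then show False using SMX.main assms(8) by blast
qed
end
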